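(* Let $P$ be a distribution on $\mathbb R$ with mean $\mu$ and variance $\sigma^2\in(0,\infty)$, let $X_1,X_2,\dots\overset{\mathrm{iid}}{\sim}P$, let $\alpha\in(0,1)$, and let $\{\mathrm{CI}_t\}$ be a $(1-\alpha)$-confidence sequence for $\mu$ (i.e. $\Pr[\forall t\in\mathbb N^+,\ \mu\in\mathrm{CI}_t]\ge1-\alpha$, each $\mathrm{CI}_t\subseteq\mathbb R$ depending on $X_1,\dots,X_t$) such that $\widehat\mu_t=\frac1t\sum_{i=1}^tX_i\in\mathrm{CI}_t$ for all $t$. Writing $|\mathrm{CI}_t|=\sup\mathrm{CI}_t-\inf\mathrm{CI}_t$, $$\Pr\left[\limsup_{t\to\infty}\frac{|\mathrm{CI}_t|}{\sigma}\sqrt{\frac{t}{2\log\log t}}\ge1\right]\ge1-\alpha.$$ *)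

theory Defs
  imports "HOL-Probability.Probability"
begin

text \<open>Width of a set of reals, sup minus inf, computed in the extended reals
  (so that unbounded sets get width infinity).\<close>
definition ci_width :: "real set \<Rightarrow> ereal" where
  "ci_width S = Sup (ereal ` S) - Inf (ereal ` S)"

definition obs :: "(nat \<Rightarrow> 'a \<Rightarrow> real) \<Rightarrow> nat \<Rightarrow> 'a \<Rightarrow> real list" where
  "obs X t \<omega> = map (\<lambda>i. X i \<omega>) [1..<t+1]"

end

theory Submission
  imports Defs "HOL-Probability.Probability" "HOL-Real_Asymp.Real_Asymp"
begin

locale iid_lil = prob_space +
  fixes Y :: "nat \<Rightarrow> 'a \<Rightarrow> real" and Q :: "real measure"
  assumes indepY: "indep_vars (\<lambda>_. borel) Y UNIV"
    and distrY: "\<And>n. distr M borel (Y n) = Q"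
    and mean0: "\<And>n. expectation (Y n) = 0"
    and sqint: "\<And>n. integrable M (\<lambda>x. (Y n x)^2)"
    and var1: "\<And>n. variance (Y n) = 1"
begin

lemma Y_meas[measurable]: "Y n \<in> borel_measurable M"
  using indepY unfolding indep_vars_def2 by simp

definition T :: "nat \<Rightarrow> 'a \<Rightarrow> real" where "T n \<omega> = (\<Sum>i<n. Y i \<omega>)"

lemma T_meas[measurable]: "T n \<in> borel_measurable M"
  unfolding T_def by measurable

lemma block_distr:
  assumes "finite A"
  shows "distr M borel (\<lambda>\<omega>. \<Sum>i\<in>A. Y i \<omega>) = distr M borel (T (card A))"
proof (rule Levy_uniqueness)
  show "real_distribution (distr M borel (\<lambda>\<omega>. \<Sum>i\<in>A. Y i \<omega>))" by simp
  show "real_distribution (distr M borel (T (card A)))" by simp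
  have "char (distr M borel (\<lambda>\<omega>. \<Sum>i\<in>A. Y i \<omega>)) t = char Q t ^ card A" for t
    using char_distr_sum[OF indep_vars_subset[OF indepY], of A t] by (simp add: distrY)
  moreover have "char (distr M borel (T (card A))) t = char Q t ^ card A" for t
    using char_distr_sum[OF indep_vars_subset[OF indepY], of "{..<card A}" t]
    by (simp add: distrY T_def[abs_def])
  ultimately show "char (distr M borel (\<lambda>\<omega>. \<Sum>i\<in>A. Y i \<omega>)) = char (distr M borel (T (card A)))"
    by auto
qed

lemma block_prob:
  assumes "finite A"
  shows "prob {\<omega>\<in>space M. c \<le> (\<Sum>i\<in>A. Y i \<omega>)} = prob {\<omega>\<in>space M. c \<le> T (card A) \<omega>}"
proof -
  have "prob {\<omega>\<in>space M. c \<le> (\<Sum>i\<in>A. Y i \<omega>)} = measure (distr M borel (\<lambda>\<omega>. \<Sum>i\<in>A. Y i \<omega>)) {c..}"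
    by (subst measure_distr) (auto intro!: arg_cong[where f=prob])
  also have "\<dots> = measure (distr M borel (T (card A))) {c..}"
    using block_distr[OF assms] by simp
  also have "\<dots> = prob {\<omega>\<in>space M. c \<le> T (card A) \<omega>}"
    by (subst measure_distr) (auto intro!: arg_cong[where f=prob])
  finally show ?thesis .
qed

lemma block_indep:
  assumes "disjoint_family_on K L"
  shows "indep_vars (\<lambda>_. borel) (\<lambda>j \<omega>. \<Sum>i\<in>K j. Y i \<omega>) L"
proof -
  have "indep_vars (\<lambda>j. PiM (K j) (\<lambda>_. borel)) (\<lambda>j \<omega>. restrict (\<lambda>i. Y i \<omega>) (K j)) L"
    by (rule indep_vars_restrict[OF indepY _ assms]) auto
  then have "indep_vars (\<lambda>_. borel) (\<lambda>j \<omega>. (\<lambda>f. \<Sum>i\<in>K j. f i) (restrict (\<lambda>i. Y i \<omega>) (K j))) L"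
    by (rule indep_vars_compose2) measurable
  then show ?thesis
    by (rule indep_vars_cong[THEN iffD1, rotated -1]) auto
qed


lemma clt_tail:
  assumes pos: "0 < 1 - cdf std_normal_distribution a"
  shows "eventually (\<lambda>n. (1 - cdf std_normal_distribution a) / 2 \<le> prob {\<omega>\<in>space M. a * sqrt n \<le> T n \<omega>}) sequentially"
proof -
  have clt: "weak_conv_m (\<lambda>n. distr M borel (\<lambda>x. (\<Sum>i<n. Y i x) / sqrt (real n * 1\<^sup>2))) std_normal_distribution"
    by (rule central_limit_theorem_zero_mean[OF indepY mean0 _ sqint _ distrY]) (auto simp: var1)
  interpret N: real_distribution std_normal_distribution by (rule real_dist_normal_dist)
  have "emeasure std_normal_distribution {a} = 0"
    by (subst emeasure_density) (auto intro!: nn_integral_null_set)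
  then have "measure std_normal_distribution {a} = 0" by (simp add: measure_def)
  then have cont: "isCont (cdf std_normal_distribution) a" by (simp add: N.isCont_cdf)
  let ?g = "\<lambda>n x. (\<Sum>i<n. Y i x) / sqrt (real n * 1\<^sup>2)"
  have "(\<lambda>n. cdf (distr M borel (?g n)) a) \<longlonglongrightarrow> cdf std_normal_distribution a"
    using clt cont unfolding weak_conv_m_def weak_conv_def by blast
  moreover have "cdf (distr M borel (?g n)) a = prob {x\<in>space M. ?g n x \<le> a}" for n
    unfolding cdf_def by (subst measure_distr) (auto intro!: arg_cong[where f=prob])
  ultimately have lim: "(\<lambda>n. 1 - prob {x\<in>space M. ?g n x \<le> a}) \<longlonglongrightarrow> 1 - cdf std_normal_distribution a"
    by (auto intro!: tendsto_diff)
  have "eventually (\<lambda>n. (1 - cdf std_normal_distribution a) / 2 < 1 - prob {x\<in>space M. ?g n x \<le> a}) sequentially"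
    by (rule order_tendstoD(1)[OF lim]) (use pos in auto)
  then show ?thesis
    using eventually_gt_at_top[of 0]
  proof eventually_elim
    case (elim n)
    have "1 - prob {x\<in>space M. ?g n x \<le> a} = prob (space M - {x\<in>space M. ?g n x \<le> a})"
      by (subst prob_compl) auto
    also have "\<dots> \<le> prob {\<omega>\<in>space M. a * sqrt n \<le> T n \<omega>}"
    proof (rule finite_measure_mono)
      show "space M - {x \<in> space M. ?g n x \<le> a} \<subseteq> {\<omega> \<in> space M. a * sqrt (real n) \<le> T n \<omega>}"
        using elim(2) by (auto simp: T_def field_simps not_le)
    qed measurable
    finally show ?case using elim by simp
  qed
qed

lemma blocks_lower:
  assumes q: "0 \<le> q" and a: "0 \<le> a" and N0: "1 \<le> N0"
    and hyp: "\<And>l. N0 \<le> l \<Longrightarrow> q \<le> prob {\<omega>\<in>space M. a * sqrt l \<le> T l \<omega>}"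
    and k: "1 \<le> k" and N: "N0 * k \<le> N"
  shows "q ^ k \<le> prob {\<omega>\<in>space M. k * a * sqrt (real (N div k)) \<le> T N \<omega>}"
proof -
  define m where "m = N div k"
  have mN0: "N0 \<le> m" unfolding m_def using N k
    by (simp add: less_eq_div_iff_mult_less_eq)
  have mk: "k * m \<le> N" unfolding m_def by (simp add: mult.commute)
  obtain k' where k': "k = Suc k'" using k by (cases k) auto
  define K where "K b = (if b < k' then {b*m..<b*m+m} else {k'*m..<N})" for b
  have K1: "K b \<subseteq> {b*m..}" if "b < k" for b
  proof (cases "b < k'")
    case False
    then have "b = k'" using that k' by auto
    then show ?thesis by (auto simp: K_def)
  qed (auto simp: K_def)
  have K2: "K b \<subseteq> {..<(b+1)*m}" if "b < k'" for b
    using that by (auto simp: K_def)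
  have disj: "disjoint_family_on K {..<k}"
  unfolding disjoint_family_on_def proof (intro ballI impI)
    have aux: "K b1 \<inter> K b2 = {}" if "b1 < b2" "b2 < k" for b1 b2
    proof -
      have "b1 < k'" using that k' by auto
      moreover have "(b1+1)*m \<le> b2*m" using that by (intro mult_right_mono) auto
      ultimately show ?thesis using K1[OF that(2)] K2[of b1] by fastforce
    qed
    fix b1 b2 assume "b1 \<in> {..<k}" "b2 \<in> {..<k}" "b1 \<noteq> b2"
    then show "K b1 \<inter> K b2 = {}"
      using aux[of b1 b2] aux[of b2 b1] by (cases "b1 < b2") (auto simp: Int_commute)
  qed
  have cardK: "m \<le> card (K b)" if "b < k" for b
  proof (cases "b < k'")
    case False
    have "k' * m + m \<le> N" using mk k' by simp
    then show ?thesis using False by (simp add: K_def)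
  qed (simp add: K_def)
  have ind: "indep_vars (\<lambda>_. borel) (\<lambda>b \<omega>. \<Sum>i\<in>K b. Y i \<omega>) {..<k}"
    by (rule block_indep[OF disj])
  let ?E = "\<Inter>b\<in>{..<k}. (\<lambda>\<omega>. \<Sum>i\<in>K b. Y i \<omega>) -` {a * sqrt m..} \<inter> space M"
  have "prob ?E = (\<Prod>b\<in>{..<k}. prob ((\<lambda>\<omega>. \<Sum>i\<in>K b. Y i \<omega>) -` {a * sqrt m..} \<inter> space M))"
    by (rule indep_varsD[OF ind]) (use k in \<open>auto simp: lessThan_empty_iff\<close>)
  also have "\<dots> \<ge> (\<Prod>b\<in>{..<k}. q)"
  proof (rule prod_mono)
    fix b assume b: "b \<in> {..<k}"
    have fin: "finite (K b)" by (simp add: K_def)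
    have "q \<le> prob {\<omega>\<in>space M. a * sqrt (card (K b)) \<le> T (card (K b)) \<omega>}"
      using hyp cardK[of b] b mN0 by auto
    also have "\<dots> \<le> prob {\<omega>\<in>space M. a * sqrt m \<le> T (card (K b)) \<omega>}"
    proof (rule finite_measure_mono)
      have "a * sqrt m \<le> a * sqrt (card (K b))"
        using cardK[of b] b a by (intro mult_left_mono) auto
      then show "{\<omega>\<in>space M. a * sqrt (card (K b)) \<le> T (card (K b)) \<omega>} \<subseteq> {\<omega>\<in>space M. a * sqrt m \<le> T (card (K b)) \<omega>}"
        by auto
    qed measurable
    also have "\<dots> = prob {\<omega>\<in>space M. a * sqrt m \<le> (\<Sum>i\<in>K b. Y i \<omega>)}"
      by (rule block_prob[OF fin, symmetric])
    also have "\<dots> = prob ((\<lambda>\<omega>. \<Sum>i\<in>K b. Y i \<omega>) -` {a * sqrt m..} \<inter> space M)"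
      by (auto intro!: arg_cong[where f=prob])
    finally show "0 \<le> q \<and> q \<le> prob ((\<lambda>\<omega>. \<Sum>i\<in>K b. Y i \<omega>) -` {a * sqrt m..} \<inter> space M)"
      using q by simp
  qed
  finally have "q ^ k \<le> prob ?E" by simp
  also have "prob ?E \<le> prob {\<omega>\<in>space M. k * a * sqrt (real (N div k)) \<le> T N \<omega>}"
  proof (rule finite_measure_mono)
    show "?E \<subseteq> {\<omega>\<in>space M. k * a * sqrt (real (N div k)) \<le> T N \<omega>}"
    proof safe
      fix \<omega> assume E: "\<omega> \<in> ?E"
      then show "\<omega> \<in> space M" using k by (auto simp: lessThan_empty_iff)
      have ge: "a * sqrt m \<le> (\<Sum>i\<in>K b. Y i \<omega>)" if "b < k" for b
        using E that by (auto split: if_splits)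
      have "T N \<omega> = (\<Sum>i\<in>{..<k'*m}. Y i \<omega>) + (\<Sum>i\<in>{k'*m..<N}. Y i \<omega>)"
        unfolding T_def using mk k' atLeast0LessThan
        by (metis (no_types, lifting) add_leD2 mult.commute mult_Suc sum.atLeastLessThan_concat zero_le)
      also have "(\<Sum>i\<in>{..<k'*m}. Y i \<omega>) = (\<Sum>b<k'. \<Sum>i\<in>{b*m..<b*m+m}. Y i \<omega>)"
        by (rule sum.nat_group[symmetric])
      also have "\<dots> = (\<Sum>b<k'. \<Sum>i\<in>K b. Y i \<omega>)"
        by (intro sum.cong) (auto simp: K_def)
      also have "(\<Sum>i\<in>{k'*m..<N}. Y i \<omega>) = (\<Sum>i\<in>K k'. Y i \<omega>)"
        by (simp add: K_def)
      finally have "T N \<omega> = (\<Sum>b<k. \<Sum>i\<in>K b. Y i \<omega>)" by (simp add: k')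
      moreover have "(\<Sum>b<k. a * sqrt m) \<le> (\<Sum>b<k. \<Sum>i\<in>K b. Y i \<omega>)"
        by (intro sum_mono ge) auto
      ultimately show "k * a * sqrt (real (N div k)) \<le> T N \<omega>"
        by (simp add: m_def)
    qed
  qed measurable
  finally show ?thesis .
qed

end

lemma gauss_tail:
  fixes a :: real assumes "0 \<le> a"
  shows "exp (- (a+1)\<^sup>2 / 2) / sqrt (2 * pi) \<le> 1 - cdf std_normal_distribution a"
proof -
  interpret N: real_distribution std_normal_distribution by (rule real_dist_normal_dist)
  let ?d = "exp (- (a+1)\<^sup>2 / 2) / sqrt (2 * pi)"
  have "ennreal ?d = (\<integral>\<^sup>+x. ennreal ?d * indicator {a<..a+1} x \<partial>lborel)"
    by (simp add: nn_integral_cmult)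
  also have "\<dots> \<le> (\<integral>\<^sup>+x. ennreal (std_normal_density x) * indicator {a<..} x \<partial>lborel)"
  proof (rule nn_integral_mono)
    fix x
    show "ennreal ?d * indicator {a<..a+1} x \<le> ennreal (std_normal_density x) * indicator {a<..} x"
    proof (cases "x \<in> {a<..a+1}")
      case True
      then have "x\<^sup>2 \<le> (a+1)\<^sup>2" using assms by (intro power_mono) auto
      then have "?d \<le> std_normal_density x"
        by (auto simp: std_normal_density_def divide_simps)
      then show ?thesis using True by (auto simp: indicator_def)
    qed (auto simp: indicator_def)
  qed
  also have "\<dots> = emeasure std_normal_distribution {a<..}"
    by (subst emeasure_density) auto
  also have "\<dots> = ennreal (measure std_normal_distribution {a<..})"
    by (simp add: N.emeasure_eq_measure)
  finally have "?d \<le> measure std_normal_distribution {a<..}"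
    by (subst (asm) ennreal_le_iff) auto
  also have "measure std_normal_distribution {a<..} = 1 - cdf std_normal_distribution a"
  proof -
    have "{a<..} = space std_normal_distribution - {..a}" by auto
    then show ?thesis using N.prob_compl[of "{..a}"] by (simp add: cdf_def)
  qed
  finally show ?thesis .
qed


lemma params:
  fixes c :: real
  assumes c: "0 < c" "c < 1"
  obtains \<theta> :: nat and x a :: real where "3 \<le> \<theta>" "c * (1 + 1 / sqrt \<theta>) < x" "0 \<le> a" "0 \<le> x"
    "0 < 1 - cdf std_normal_distribution a"
    "0 < - ln ((1 - cdf std_normal_distribution a) / 2)"
    "2 * x\<^sup>2 < a\<^sup>2 * (1 - 1/\<theta>) / (- ln ((1 - cdf std_normal_distribution a) / 2))"
proof -
  interpret N: real_distribution std_normal_distribution by (rule real_dist_normal_dist)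
  define x where "x = (1 + c) / 2"
  define \<theta> where "\<theta> = nat \<lceil>(2/(1-c))\<^sup>2\<rceil> + 3"
  have th3: "3 \<le> \<theta>" by (simp add: \<theta>_def)
  have thgt: "(2/(1-c))\<^sup>2 < real \<theta>" unfolding \<theta>_def by linarith
  have sth: "2/(1-c) < sqrt \<theta>"
    using real_sqrt_less_mono[OF thgt] c by simp
  have inv1: "1 / sqrt \<theta> < (1-c)/2"
  proof -
    have "0 < 2/(1-c)" using c by simp
    moreover have "0 < sqrt \<theta>" using th3 by simp
    ultimately have "0 < sqrt \<theta> * (2/(1-c))" by simp
    then have "1 / sqrt \<theta> < 1 / (2/(1-c))" by (rule divide_strict_left_mono[OF sth zero_less_one])
    then show ?thesis by simp
  qed
  have P1: "c * (1 + 1 / sqrt \<theta>) < x"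
  proof -
    have "c * (1 / sqrt \<theta>) < 1 * ((1-c)/2)"
      using inv1 c by (intro mult_strict_mono') auto
    then show ?thesis by (simp add: x_def distrib_left)
  qed
  have inv2: "1 / real \<theta> < (1-c)/2"
  proof -
    have "0 < (2/(1-c))\<^sup>2" using c by simp
    moreover have "0 < real \<theta>" using th3 by simp
    ultimately have "0 < real \<theta> * (2/(1-c))\<^sup>2" by simp
    then have "1 / real \<theta> < 1 / (2/(1-c))\<^sup>2" by (rule divide_strict_left_mono[OF thgt zero_less_one])
    also have "\<dots> = (1-c)\<^sup>2 / 4" by (simp add: power_divide)
    also have "\<dots> \<le> (1-c)/2" using c mult_le_one[of c c] by (simp add: power2_eq_square field_simps)
    finally show ?thesis .
  qed
  have x01: "0 \<le> x" "x \<le> 1" using c by (auto simp: x_def)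
  have xx: "x\<^sup>2 \<le> x" using x01 by (simp add: power2_eq_square mult_left_le)
  have x2: "x\<^sup>2 < 1 - 1/\<theta>" using xx inv2 by (simp add: x_def)
  define r where "r = x\<^sup>2 / (1 - 1/\<theta>)"
  have th_pos: "0 < 1 - 1/real \<theta>" using x2 by (smt (verit) zero_le_power2)
  have r01: "0 \<le> r" "r < 1" using x2 th_pos by (auto simp: r_def)
  define a where "a = 20 / (1 - r)"
  have a20: "20 \<le> a" using r01 by (simp add: a_def field_simps)
  have ra: "(1 - r) * a = 20" using r01 by (simp add: a_def field_simps)
  define F where "F = 1 - cdf std_normal_distribution a"
  define e where "e = exp (- (a+1)\<^sup>2 / 2)"
  have Fge: "e / sqrt (2*pi) \<le> F" unfolding F_def e_def by (rule gauss_tail) (use a20 in simp)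
  have epos: "0 < e / sqrt (2*pi)" by (simp add: e_def)
  have Fpos: "0 < F" using Fge epos by linarith
  have Fle1: "F \<le> 1" unfolding F_def using N.cdf_nonneg[of a] by simp
  define l where "l = - ln (F / 2)"
  have lpos: "0 < l" unfolding l_def using Fpos Fle1 by simp
  have sq: "sqrt (2*pi) \<le> 3"
  proof -
    have "2 * pi \<le> 3\<^sup>2" using pi_less_4 by simp
    then show ?thesis using real_sqrt_le_mono[of "2*pi" "3\<^sup>2"] by simp
  qed
  have lbound: "l \<le> (a+1)\<^sup>2/2 + 5"
  proof -
    have "ln (e / (2 * sqrt (2*pi))) \<le> ln (F / 2)"
      using Fge epos Fpos by (subst ln_le_cancel_iff) (auto simp: field_simps)
    moreover have "ln (e / (2 * sqrt (2*pi))) = - (a+1)\<^sup>2/2 - ln (2 * sqrt (2*pi))"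
      by (simp add: e_def ln_div)
    moreover have "ln (2 * sqrt (2*pi)) \<le> 2 * sqrt (2*pi) - 1"
      by (rule ln_le_minus_one) simp
    ultimately show ?thesis unfolding l_def using sq by linarith
  qed
  have key: "2 * x\<^sup>2 * l < a\<^sup>2 * (1 - 1/\<theta>)"
  proof -
    have "2 * x\<^sup>2 * l \<le> 2 * x\<^sup>2 * ((a+1)\<^sup>2/2 + 5)"
      using lbound by (intro mult_left_mono) auto
    also have "\<dots> = ((1 - 1/\<theta>) * r) * ((a+1)\<^sup>2 + 10)"
    proof -
      have hr: "(1 - 1/\<theta>) * r = x\<^sup>2" using th_pos unfolding r_def by (metis less_irrefl nonzero_mult_div_cancel_left times_divide_eq_right)
      show ?thesis unfolding hr by (simp add: algebra_simps)
    qed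
    also have "\<dots> = (1 - 1/\<theta>) * (r * ((a+1)\<^sup>2 + 10))" by (simp only: mult.assoc)
    also have "\<dots> < (1 - 1/\<theta>) * a\<^sup>2"
    proof (rule mult_strict_left_mono[OF _ th_pos])
      have "r * ((a+1)\<^sup>2 + 10) = r * a\<^sup>2 + r * (2*a + 11)"
        by (simp add: power2_eq_square algebra_simps)
      also have "r * (2*a + 11) \<le> 1 * (2*a + 11)"
        using r01 a20 by (intro mult_right_mono) auto
      also have "2*a + 11 < (1 - r) * a * a" using ra a20 by simp
      finally show "r * ((a+1)\<^sup>2 + 10) < a\<^sup>2"
        by (simp add: power2_eq_square algebra_simps)
    qed
    finally show ?thesis by (simp add: mult.commute)
  qed
  show ?thesis
  proof (rule that[of \<theta> x a])
    show "2 * x\<^sup>2 < a\<^sup>2 * (1 - 1/\<theta>) / (- ln ((1 - cdf std_normal_distribution a) / 2))"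
      using key lpos by (simp add: l_def F_def field_simps)
  qed (use th3 P1 a20 x01 Fpos lpos in \<open>auto simp: F_def l_def\<close>)
qed


lemma asymp_facts:
  fixes \<theta> N0 :: nat and a x l :: real
  assumes th: "3 \<le> \<theta>" and l: "0 < l" and a: "0 \<le> a" and x: "0 \<le> x"
    and beta: "2 * x\<^sup>2 < a\<^sup>2 * (1 - 1/\<theta>) / l"
  shows "eventually (\<lambda>j. 1 \<le> nat \<lfloor>ln j / l\<rfloor> \<and> N0 * nat \<lfloor>ln j / l\<rfloor> \<le> \<theta>^j - \<theta>^(j-1) \<and>
     x * sqrt (2 * real (\<theta>^j) * ln (ln (real (\<theta>^j))))
       \<le> real (nat \<lfloor>ln j / l\<rfloor>) * a * sqrt (real ((\<theta>^j - \<theta>^(j-1)) div nat \<lfloor>ln j / l\<rfloor>))) sequentially"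
proof -
  define \<beta> where "\<beta> = a\<^sup>2 * (1 - 1/\<theta>) / l - 2 * x\<^sup>2"
  have \<beta>: "\<beta> > 0" using beta by (simp add: \<beta>_def)
  define g where "g = ln (ln (real \<theta>))"
  define C1 where "C1 = (a\<^sup>2 * (1 - 1/\<theta>) + a\<^sup>2 / l\<^sup>2 + 2 * x\<^sup>2 * \<bar>g\<bar> + 1) / \<beta>"
  have ev1: "eventually (\<lambda>j::nat. 2 * l \<le> ln (real j)) sequentially" by real_asymp
  have ev2: "eventually (\<lambda>j::nat. C1 \<le> ln (real j)) sequentially" by real_asymp
  have ev3: "eventually (\<lambda>j::nat. (ln (real j))\<^sup>2 \<le> 2^j) sequentially" by real_asymp
  have ev4: "eventually (\<lambda>j::nat. (N0 / l) * ln (real j) \<le> 2^j / 2) sequentially" by real_asymp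
  have th1: "1 < real \<theta>" "ln (real \<theta>) > 0" using th by auto
  show ?thesis using ev1 ev2 ev3 ev4 eventually_ge_at_top[of 1]
  proof eventually_elim
    case (elim j)
    define u where "u = ln (real j)"
    define k where "k = nat \<lfloor>u / l\<rfloor>"
    define N where "N = \<theta>^j - \<theta>^(j-1)"
    define P where "P = real \<theta> ^ j"
    have u: "2 * l \<le> u" "C1 \<le> u" "u\<^sup>2 \<le> 2^j" "(N0 / l) * u \<le> 2^j / 2"
      using elim by (auto simp: u_def)
    have ul: "2 \<le> u / l" using u l by (simp add: field_simps)
    have kr: "real k \<le> u / l" "u / l - 1 < real k"
      using ul by (auto simp: k_def)
    have k1: "1 \<le> k" using kr ul by linarith
    have P: "P > 0" "2^j \<le> P" using th by (auto simp: P_def intro!: power_mono)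
    have thj: "\<theta>^j = \<theta> * \<theta>^(j-1)" using elim(5) by (cases j) auto
    have "\<theta>^(j-1) \<le> \<theta>^j" using thj th by simp
    moreover have thjr: "real \<theta> ^ j = real \<theta> * real \<theta> ^ (j-1)"
      using thj by (metis of_nat_mult of_nat_power)
    ultimately have NP: "real N = P * (1 - 1/\<theta>)"
      unfolding N_def P_def using th by (simp add: of_nat_diff field_simps)
    have NP2: "P / 2 \<le> real N"
    proof -
      have "1 / real \<theta> \<le> 1 / 2" using th by (simp add: field_simps)
      then have "P * (1/2) \<le> P * (1 - 1/\<theta>)" using P by (intro mult_left_mono) auto
      then show ?thesis using NP by simp
    qed
    have E2: "N0 * k \<le> N"
    proof -
      have "real N0 * real k \<le> real N0 * (u / l)" using kr by (intro mult_left_mono) auto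
      also have "\<dots> = (N0 / l) * u" by simp
      also have "\<dots> \<le> 2^j / 2" by (rule u)
      also have "\<dots> \<le> real N" using P NP2 by simp
      finally show ?thesis by (metis of_nat_le_iff of_nat_mult)
    qed
    have lnP: "ln (ln P) = u + g"
    proof -
      have "ln P = real j * ln \<theta>" unfolding P_def using th by (simp add: ln_realpow)
      then show ?thesis using elim(5) th1 by (simp add: ln_mult u_def g_def)
    qed
    have divk: "real N / real k - 1 \<le> real (N div k)"
    proof -
      have "N mod k < k" using k1 by simp
      moreover have "k * (N div k) + N mod k = N" by (rule mult_div_mod_eq)
      ultimately have "N < k * (N div k) + k" by linarith
      then have "N < k * (N div k + 1)" by (simp add: distrib_left)
      then have "real N < real k * (real (N div k) + 1)"
        by (metis of_nat_1 of_nat_add of_nat_less_iff of_nat_mult)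
      then show ?thesis using k1 by (simp add: field_simps)
    qed
    have key: "x\<^sup>2 * (2 * P * (u + g)) \<le> (real k * a)\<^sup>2 * real (N div k)"
    proof -
      have "(real k * a)\<^sup>2 * real (N div k) \<ge> (real k * a)\<^sup>2 * (real N / real k - 1)"
        using divk by (intro mult_left_mono) auto
      moreover have "(real k * a)\<^sup>2 * (real N / real k - 1) = a\<^sup>2 * (real k * real N - (real k)\<^sup>2)"
        using k1 by (simp add: field_simps power2_eq_square)
      moreover have "real k * real N \<ge> (u / l - 1) * real N"
        using kr by (intro mult_right_mono) auto
      moreover have "(real k)\<^sup>2 \<le> (u / l)\<^sup>2"
        using kr by (intro power_mono) auto
      ultimately have A: "(real k * a)\<^sup>2 * real (N div k) \<ge> a\<^sup>2 * ((u / l - 1) * real N - (u / l)\<^sup>2)"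
        by (smt (verit, ccfv_SIG) a mult_left_mono zero_le_power2)
      have B: "(u / l)\<^sup>2 \<le> P / l\<^sup>2"
        using u(3) P l by (simp add: power_divide divide_right_mono)
      have "x\<^sup>2 * (2 * P * (u + g)) \<le> P * (a\<^sup>2 * (1 - 1/\<theta>) * (u / l) - a\<^sup>2 * (1 - 1/\<theta>) - a\<^sup>2 / l\<^sup>2)"
      proof -
        have "\<beta> * u \<ge> \<beta> * C1" using u(2) \<beta> by simp
        also have "\<beta> * C1 = a\<^sup>2 * (1 - 1/\<theta>) + a\<^sup>2 / l\<^sup>2 + 2 * x\<^sup>2 * \<bar>g\<bar> + 1"
          using \<beta> by (simp add: C1_def)
        finally have h1: "a\<^sup>2 * (1 - 1/\<theta>) + a\<^sup>2 / l\<^sup>2 + 2 * x\<^sup>2 * \<bar>g\<bar> + 1 \<le> \<beta> * u"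
          .
        have h3: "\<beta> * u = a\<^sup>2 * (1 - 1/\<theta>) * (u / l) - 2 * x\<^sup>2 * u"
          unfolding \<beta>_def left_diff_distrib by simp
        have h2: "2 * x\<^sup>2 * g \<le> 2 * x\<^sup>2 * \<bar>g\<bar>" by (intro mult_left_mono) auto
        have "2 * x\<^sup>2 * (u + g) \<le> a\<^sup>2 * (1 - 1/\<theta>) * (u / l) - a\<^sup>2 * (1 - 1/\<theta>) - a\<^sup>2 / l\<^sup>2"
          using h1 h2 h3 by (simp add: distrib_left)
        then have "P * (2 * x\<^sup>2 * (u + g)) \<le> P * (a\<^sup>2 * (1 - 1/\<theta>) * (u / l) - a\<^sup>2 * (1 - 1/\<theta>) - a\<^sup>2 / l\<^sup>2)"
          using P by (intro mult_left_mono) auto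
        then show ?thesis by (simp add: algebra_simps)
      qed
      also have "\<dots> = a\<^sup>2 * ((u / l - 1) * real N) - a\<^sup>2 * (P / l\<^sup>2)"
        unfolding NP using l th by (simp add: field_simps)
      also have "\<dots> \<le> a\<^sup>2 * ((u / l - 1) * real N - (u / l)\<^sup>2)"
        using mult_left_mono[OF B, of "a\<^sup>2"] by (simp add: right_diff_distrib)
      also have "\<dots> \<le> (real k * a)\<^sup>2 * real (N div k)" by (rule A)
      finally show ?thesis .
    qed
    have "x * sqrt (2 * P * ln (ln P)) = sqrt (x\<^sup>2 * (2 * P * (u + g)))"
      using x by (simp add: real_sqrt_mult lnP)
    also have "\<dots> \<le> sqrt ((real k * a)\<^sup>2 * real (N div k))"
      using key by simp
    also have "\<dots> = real k * a * sqrt (real (N div k))"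
      using a by (simp add: real_sqrt_mult)
    finally have E3: "x * sqrt (2 * P * ln (ln P)) \<le> real k * a * sqrt (real (N div k))" .
    show ?case using k1 E2 E3 by (simp add: k_def N_def P_def u_def)
  qed
qed
lemma h_step:
  fixes \<theta> j :: nat
  assumes th: "3 \<le> \<theta>" and j: "2 \<le> j"
  shows "sqrt (2 * real (\<theta>^(j-1)) * ln (ln (real (\<theta>^(j-1))))) * sqrt \<theta> \<le> sqrt (2 * real (\<theta>^j) * ln (ln (real (\<theta>^j))))"
    and "0 < sqrt (2 * real (\<theta>^j) * ln (ln (real (\<theta>^j))))"
proof -
  have thj: "\<theta>^j = \<theta>^(j-1) * \<theta>" using j by (cases j) (auto simp: mult.commute)
  have ge3: "3 \<le> \<theta>^(j-1)"
  proof -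
    have "\<theta>^1 \<le> \<theta>^(j-1)" using th j by (intro power_increasing) auto
    then show ?thesis using th by simp
  qed
  have le: "\<theta>^(j-1) \<le> \<theta>^j" using thj th by simp
  have g3: "3 \<le> real (\<theta>^(j-1))" using of_nat_le_iff[THEN iffD2, OF ge3] by (simp only: of_nat_numeral)
  have "ln (real (\<theta>^(j-1))) > 0" using g3 by (intro ln_gt_zero) linarith
  moreover have "ln (real (\<theta>^(j-1))) \<le> ln (real (\<theta>^j))"
  proof -
    have le_r: "real (\<theta>^(j-1)) \<le> real (\<theta>^j)" using le by (simp only: of_nat_le_iff)
    show ?thesis using g3 le_r by (subst ln_le_cancel_iff) linarith+
  qed
  ultimately have lnln: "ln (ln (real (\<theta>^(j-1)))) \<le> ln (ln (real (\<theta>^j)))"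
    by (subst ln_le_cancel_iff) auto
  have "sqrt (2 * real (\<theta>^(j-1)) * ln (ln (real (\<theta>^(j-1))))) * sqrt \<theta>
        = sqrt (2 * real (\<theta>^j) * ln (ln (real (\<theta>^(j-1)))))"
    by (simp add: real_sqrt_mult[symmetric] thj algebra_simps)
  also have "\<dots> \<le> sqrt (2 * real (\<theta>^j) * ln (ln (real (\<theta>^j))))"
    using lnln by (intro real_sqrt_le_mono mult_left_mono) auto
  finally show "sqrt (2 * real (\<theta>^(j-1)) * ln (ln (real (\<theta>^(j-1))))) * sqrt \<theta> \<le> sqrt (2 * real (\<theta>^j) * ln (ln (real (\<theta>^j))))" .
  have "\<theta>^(j-1) * 1 < \<theta>^(j-1) * \<theta>" using ge3 th by (intro mult_strict_left_mono) auto
  then have "\<theta>^(j-1) < \<theta>^j" using thj by (metis mult.right_neutral)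
  then have "real (\<theta>^(j-1)) < real (\<theta>^j)" by (simp only: of_nat_less_iff)
  then have "exp 1 < real (\<theta>^j)" using exp_le g3 by linarith
  then have "ln (exp 1) < ln (real (\<theta>^j))"
    using exp_gt_zero[of 1] by (subst ln_less_cancel_iff) linarith+
  then have "1 < ln (real (\<theta>^j))" by simp
  then have "0 < ln (ln (real (\<theta>^j)))" by simp
  then show "0 < sqrt (2 * real (\<theta>^j) * ln (ln (real (\<theta>^j))))"
    using ge3 le th by (simp add: mult_pos_pos)
qed

lemma telescope:
  assumes "1 \<le> J"
  shows "(\<Prod>j\<in>{J..J+d}. 1 - 1 / real j) = (real J - 1) / real (J + d)"
proof (induction d)
  case 0
  then show ?case using assms by (simp add: field_simps)
next
  case (Suc d)
  have "{J..J + Suc d} = insert (J + Suc d) {J..J+d}" by auto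
  then have "(\<Prod>j\<in>{J..J+Suc d}. 1 - 1 / real j) = (1 - 1 / real (J + Suc d)) * (\<Prod>j\<in>{J..J+d}. 1 - 1 / real j)"
    by simp
  also have "\<dots> = (1 - 1 / real (J + Suc d)) * ((real J - 1) / real (J + d))" by (simp add: Suc.IH)
  also have "\<dots> = (real J - 1) / real (J + Suc d)"
  proof -
    have nz: "real (J + d) \<noteq> 0" "real (J + Suc d) \<noteq> 0" using assms by auto
    have "1 - 1 / real (J + Suc d) = real (J + d) / real (J + Suc d)"
      using nz by (simp add: field_simps)
    then show ?thesis using nz by simp
  qed
  finally show ?case .
qed


context iid_lil
begin

lemma lil_lower_c:
  assumes c: "0 < c" "c < 1"
  shows "AE \<omega> in M. \<forall>t0. \<exists>t\<ge>t0. c * sqrt (2 * real t * ln (ln (real t))) \<le> \<bar>T t \<omega>\<bar>"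
proof -
  obtain \<theta> :: nat and x a :: real where th: "3 \<le> \<theta>" and P1: "c * (1 + 1 / sqrt \<theta>) < x"
    and a: "0 \<le> a" and x: "0 \<le> x" and Fpos: "0 < 1 - cdf std_normal_distribution a"
    and lpos: "0 < - ln ((1 - cdf std_normal_distribution a) / 2)"
    and beta: "2 * x\<^sup>2 < a\<^sup>2 * (1 - 1/\<theta>) / (- ln ((1 - cdf std_normal_distribution a) / 2))"
    by (rule params[OF c])
  define q where "q = (1 - cdf std_normal_distribution a) / 2"
  define l where "l = - ln q"
  have q: "0 < q" using Fpos by (simp add: q_def)
  have l: "0 < l" using lpos by (simp add: l_def q_def)
  have ql: "q = exp (- l)" using q by (simp add: l_def)
  obtain N0' where N0': "\<And>n. N0' \<le> n \<Longrightarrow> q \<le> prob {\<omega>\<in>space M. a * sqrt n \<le> T n \<omega>}"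
    using clt_tail[OF Fpos] unfolding q_def eventually_sequentially by blast
  define N0 where "N0 = max N0' 1"
  have N0: "1 \<le> N0" "\<And>n. N0 \<le> n \<Longrightarrow> q \<le> prob {\<omega>\<in>space M. a * sqrt n \<le> T n \<omega>}"
    using N0' by (auto simp: N0_def)
  define h where "h t = sqrt (2 * real t * ln (ln (real t)))" for t :: nat
  define K where "K j = {\<theta>^(j-1)..<\<theta>^j}" for j
  define D where "D j \<omega> = (\<Sum>i\<in>K j. Y i \<omega>)" for j \<omega>
  define thr where "thr j = x * h (\<theta>^j)" for j
  define B where "B j = {\<omega>\<in>space M. thr j \<le> D j \<omega>}" for j
  have Bmeas[measurable]: "B j \<in> sets M" for j unfolding B_def D_def by measurable
  have disjK: "disjoint_family_on K UNIV"
  proof -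
    have aux: "K j1 \<inter> K j2 = {}" if "j1 < j2" for j1 j2
    proof -
      have "\<theta>^j1 \<le> \<theta>^(j2-1)" using that th by (intro power_increasing) auto
      then show ?thesis by (auto simp: K_def)
    qed
    show ?thesis unfolding disjoint_family_on_def
    proof (intro ballI impI)
      fix j1 j2 :: nat assume "j1 \<noteq> j2"
      then show "K j1 \<inter> K j2 = {}" using aux[of j1 j2] aux[of j2 j1]
        by (cases "j1 < j2") (auto simp: Int_commute)
    qed
  qed
  have indD: "indep_vars (\<lambda>_. borel) D UNIV"
    unfolding D_def[abs_def] by (rule block_indep[OF disjK])
  have probB: "eventually (\<lambda>j. 1 / real j \<le> prob (B j)) sequentially"
    using asymp_facts[OF th l a x beta[folded q_def, folded l_def], of N0] eventually_ge_at_top[of 1]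
  proof eventually_elim
    case (elim j)
    define k where "k = nat \<lfloor>ln j / l\<rfloor>"
    define N where "N = \<theta>^j - \<theta>^(j-1)"
    have k1: "1 \<le> k" and kN: "N0 * k \<le> N" and thrk: "thr j \<le> real k * a * sqrt (real (N div k))"
      using elim by (auto simp: k_def N_def thr_def h_def)
    have cardK: "card (K j) = N" by (simp add: K_def N_def)
    have "q ^ k \<le> prob {\<omega>\<in>space M. real k * a * sqrt (real (N div k)) \<le> T N \<omega>}"
      by (rule blocks_lower[OF less_imp_le[OF q] a N0(1) N0(2) k1 kN])
    also have "\<dots> = prob {\<omega>\<in>space M. real k * a * sqrt (real (N div k)) \<le> D j \<omega>}"
      unfolding D_def using block_prob[of "K j"] cardK by (simp add: K_def)
    also have "\<dots> \<le> prob (B j)"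
      unfolding B_def using thrk by (intro finite_measure_mono) (auto simp: D_def)
    finally have 1: "q ^ k \<le> prob (B j)" .
    have u0: "0 \<le> ln (real j) / l" using elim(2) l by simp
    then have "real k = of_int \<lfloor>ln (real j) / l\<rfloor>" by (simp add: k_def)
    then have "real k \<le> ln j / l" using of_int_floor_le[of "ln (real j) / l"] by linarith
    then have "l * real k \<le> ln j" using l by (simp add: field_simps)
    then have "exp (- ln j) \<le> exp (- (l * real k))" by simp
    also have "exp (- (l * real k)) = q ^ k" unfolding ql by (simp add: exp_of_nat_mult[symmetric] mult.commute)
    finally have "1 / real j \<le> q ^ k" using elim(2) by (simp add: exp_minus inverse_eq_divide)
    with 1 show ?case by linarith
  qed
  then obtain J0' where J0': "\<And>j. J0' \<le> j \<Longrightarrow> 1 / real j \<le> prob (B j)"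
    unfolding eventually_sequentially by blast
  define J0 where "J0 = max J0' 2"
  define Z where "Z J = (\<Inter>j\<in>{J..}. space M - B j)" for J
  have Zmeas[measurable]: "Z J \<in> sets M" for J unfolding Z_def by measurable
  have Z0: "prob (Z J) = 0" if J: "J0 \<le> J" for J
  proof -
    have bound: "prob (Z J) \<le> (real J - 1) / real (J + d)" for d
    proof -
      have Dm[measurable]: "D j \<in> borel_measurable M" for j unfolding D_def by measurable
      have mi: "(\<Inter>j\<in>{J..J+d}. D j -` {..<thr j} \<inter> space M) \<in> sets M"
        by (intro sets.finite_INT) auto
      have "prob (Z J) \<le> prob (\<Inter>j\<in>{J..J+d}. D j -` {..<thr j} \<inter> space M)"
        using mi by (intro finite_measure_mono) (auto simp: Z_def B_def)
      also have "\<dots> = (\<Prod>j\<in>{J..J+d}. prob (D j -` {..<thr j} \<inter> space M))"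
        by (rule indep_varsD[OF indD]) auto
      also have "\<dots> \<le> (\<Prod>j\<in>{J..J+d}. 1 - 1 / real j)"
      proof (rule prod_mono)
        fix j assume j: "j \<in> {J..J+d}"
        have "D j -` {..<thr j} \<inter> space M = space M - B j" by (auto simp: B_def)
        then have "prob (D j -` {..<thr j} \<inter> space M) = 1 - prob (B j)"
          by (simp add: prob_compl)
        moreover have "1 / real j \<le> prob (B j)" using J0' j J by (auto simp: J0_def)
        ultimately show "0 \<le> prob (D j -` {..<thr j} \<inter> space M) \<and> prob (D j -` {..<thr j} \<inter> space M) \<le> 1 - 1 / real j"
          by simp
      qed
      also have "\<dots> = (real J - 1) / real (J + d)"
        by (rule telescope) (use J in \<open>auto simp: J0_def\<close>)
      finally show ?thesis .
    qed
    show ?thesis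
    proof (rule ccontr)
      assume "prob (Z J) \<noteq> 0"
      then have p: "0 < prob (Z J)" using measure_nonneg[of M "Z J"] by linarith
      obtain d :: nat where d: "(real J - 1) / prob (Z J) < real d" using reals_Archimedean2 by blast
      have "(real J - 1) < real d * prob (Z J)" using d p by (simp add: field_simps)
      also have "\<dots> \<le> real (J + d) * prob (Z J)" using p by (intro mult_right_mono) auto
      finally have "(real J - 1) / real (J + d) < prob (Z J)"
        using J by (simp add: J0_def field_simps)
      with bound[of d] show False by linarith
    qed
  qed
  have "AE \<omega> in M. \<omega> \<notin> Z (max J J0)" for J
  proof (rule AE_not_in)
    show "Z (max J J0) \<in> null_sets M"
      using Z0[of "max J J0"] by (simp add: null_sets_def emeasure_eq_measure)
  qed
  then have "AE \<omega> in M. \<forall>J. \<omega> \<notin> Z (max J J0)"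
    by (simp add: AE_all_countable)
  moreover have "AE \<omega> in M. \<omega> \<in> space M" by (rule AE_space)
  ultimately show ?thesis
  proof eventually_elim
    case (elim \<omega>)
    then have \<omega>: "\<omega> \<in> space M" and nz: "\<forall>J. \<omega> \<notin> Z (max J J0)" by auto
    show ?case
    proof
    fix t0
    show "\<exists>t\<ge>t0. c * sqrt (2 * real t * ln (ln (real t))) \<le> \<bar>T t \<omega>\<bar>"
    proof (rule ccontr)
      assume ns: "\<not> (\<exists>t\<ge>t0. c * sqrt (2 * real t * ln (ln (real t))) \<le> \<bar>T t \<omega>\<bar>)"
      have small: "\<bar>T t \<omega>\<bar> < c * h t" if "t0 \<le> t" for t
        using ns that unfolding h_def by (meson not_le)
      obtain j where j: "max (t0 + 2) J0 \<le> j" "\<omega> \<in> B j"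
        using nz[rule_format, of "t0 + 2"] \<omega> by (auto simp: Z_def)
      have j2: "2 \<le> j" using j by auto
      have "j - 1 < 2 ^ (j - 1)" by (rule less_exp)
      also have "(2::nat) ^ (j - 1) \<le> \<theta> ^ (j - 1)" using th by (intro power_mono) auto
      finally have t0le: "t0 \<le> \<theta>^(j-1)" using j by auto
      have le: "\<theta>^(j-1) \<le> \<theta>^j" using th by (intro power_increasing) auto
      have s1: "\<bar>T (\<theta>^j) \<omega>\<bar> < c * h (\<theta>^j)" using small t0le le by auto
      have s2: "\<bar>T (\<theta>^(j-1)) \<omega>\<bar> < c * h (\<theta>^(j-1))" using small t0le by auto
      have Dj: "D j \<omega> = T (\<theta>^j) \<omega> - T (\<theta>^(j-1)) \<omega>"
        unfolding D_def T_def K_def lessThan_atLeast0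
        using sum.atLeastLessThan_concat[of 0 "\<theta>^(j-1)" "\<theta>^j" "\<lambda>i. Y i \<omega>"] le by simp
      have hs: "h (\<theta>^(j-1)) * sqrt \<theta> \<le> h (\<theta>^j)" "0 < h (\<theta>^j)"
        using h_step[OF th j2] by (simp_all add: h_def)
      have sq: "0 < sqrt \<theta>" using th by simp
      have "h (\<theta>^(j-1)) \<le> h (\<theta>^j) / sqrt \<theta>" using hs sq by (simp add: field_simps)
      then have "c * h (\<theta>^(j-1)) \<le> c * (h (\<theta>^j) / sqrt \<theta>)" using c by (intro mult_left_mono) auto
      moreover have "c * (1 + 1 / sqrt \<theta>) * h (\<theta>^j) < x * h (\<theta>^j)"
        using P1 hs by (intro mult_strict_right_mono) auto
      moreover have "thr j \<le> D j \<omega>" using j by (auto simp: B_def)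
      ultimately show False using s1 s2 Dj
        by (simp add: thr_def algebra_simps)
    qed
    qed
  qed
qed

end


lemma width_ge:
  assumes "u \<in> S" "v \<in> S"
  shows "ereal \<bar>u - v\<bar> \<le> ci_width S"
proof -
  have "ereal (max u v) \<le> Sup (ereal ` S)" using assms by (auto intro: Sup_upper simp: max_def)
  moreover have "Inf (ereal ` S) \<le> ereal (min u v)" using assms by (auto intro: Inf_lower simp: min_def)
  ultimately have "ereal (max u v) - ereal (min u v) \<le> Sup (ereal ` S) - Inf (ereal ` S)"
    by (rule ereal_minus_mono)
  moreover have "max u v - min u v = \<bar>u - v\<bar>" by (auto simp: max_def min_def)
  ultimately show ?thesis unfolding ci_width_def by (metis ereal_minus(1))
qed

lemma expr_ge:
  fixes \<sigma> d s :: real and W :: ereal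
  assumes "ereal d \<le> W" "0 < \<sigma>" "0 \<le> s"
  shows "ereal (d / \<sigma> * s) \<le> W / ereal \<sigma> * ereal s"
proof -
  have "ereal d / ereal \<sigma> \<le> W / ereal \<sigma>" using assms by (intro ereal_divide_right_mono) auto
  then have "ereal d / ereal \<sigma> * ereal s \<le> W / ereal \<sigma> * ereal s"
    using assms by (intro ereal_mult_right_mono) auto
  then show ?thesis using assms by simp
qed


lemma arith_final:
  fixes t c T :: real
  assumes t: "4 \<le> t" and h: "c * sqrt (2 * t * ln (ln t)) \<le> \<bar>T\<bar>"
  shows "c \<le> \<bar>T\<bar> / t * sqrt (t / (2 * ln (ln t)))"
proof -
  have "exp 1 < t" using exp_le t by linarith
  then have "ln (exp 1) < ln t" using exp_gt_zero[of 1] by (subst ln_less_cancel_iff) linarith+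
  then have "1 < ln t" by simp
  then have L: "0 < ln (ln t)" by simp
  define L where "L = ln (ln t)"
  have Lp: "0 < L" using L by (simp add: L_def)
  have tp: "0 < t" using t by simp
  have hp: "0 < sqrt (2 * t * L)" using Lp tp by simp
  have sp: "0 < sqrt (t / (2 * L))" using Lp tp by simp
  have prod: "sqrt (t / (2 * L)) * sqrt (2 * t * L) = t"
  proof -
    have "sqrt (t / (2 * L)) * sqrt (2 * t * L) = sqrt (t / (2 * L) * (2 * t * L))"
      by (rule real_sqrt_mult[symmetric])
    also have "t / (2 * L) * (2 * t * L) = t\<^sup>2" using Lp by (simp add: field_simps power2_eq_square)
    finally have "sqrt (t / (2 * L)) * sqrt (2 * t * L) = sqrt (t\<^sup>2)" .
    then show ?thesis using tp by (simp only: real_sqrt_abs abs_of_pos)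
  qed
  have "\<bar>T\<bar> / t * sqrt (t / (2 * L)) = (sqrt (t / (2 * L)) * \<bar>T\<bar>) / (sqrt (t / (2 * L)) * sqrt (2 * t * L))"
    unfolding prod by simp
  also have "\<dots> = \<bar>T\<bar> / sqrt (2 * t * L)"
    using sp by (rule nonzero_mult_divide_mult_cancel_left[OF less_imp_neq[symmetric]])
  finally have "\<bar>T\<bar> / t * sqrt (t / (2 * L)) = \<bar>T\<bar> / sqrt (2 * t * L)" .
  moreover have "c \<le> \<bar>T\<bar> / sqrt (2 * t * L)"
    using h hp by (simp add: L_def pos_le_divide_eq)
  ultimately show ?thesis by (simp add: L_def)
qed

theorem proposition2:
  fixes M :: "'a measure" and P :: "real measure"
    and X :: "nat \<Rightarrow> 'a \<Rightarrow> real"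
    and CI :: "nat \<Rightarrow> real list \<Rightarrow> real set"
    and \<mu> \<sigma> \<alpha> :: real
  assumes "prob_space M"
    and "prob_space P"
    and "\<And>i. i \<ge> 1 \<Longrightarrow> X i \<in> borel_measurable M"
    and "prob_space.indep_vars M (\<lambda>_. borel) X {1..}"
    and "\<And>i. i \<ge> 1 \<Longrightarrow> distr M borel (X i) = P"
    and "integrable P (\<lambda>x. x)" and "integrable P (\<lambda>x. x ^ 2)"
    and "\<mu> = (\<integral>x. x \<partial>P)"
    and "\<sigma> > 0" and "\<sigma> ^ 2 = (\<integral>x. (x - \<mu>) ^ 2 \<partial>P)"
    and "0 < \<alpha>" and "\<alpha> < 1"
    and "{\<omega> \<in> space M. \<forall>t\<ge>1. \<mu> \<in> CI t (obs X t \<omega>)} \<in> sets M"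
    and "measure M {\<omega> \<in> space M. \<forall>t\<ge>1. \<mu> \<in> CI t (obs X t \<omega>)} \<ge> 1 - \<alpha>"
    and "\<And>t \<omega>. t \<ge> 1 \<Longrightarrow> \<omega> \<in> space M \<Longrightarrow>
           (\<Sum>i=1..t. X i \<omega>) / real t \<in> CI t (obs X t \<omega>)"
  shows "\<exists>A \<in> sets M. measure M A \<ge> 1 - \<alpha> \<and>
           A \<subseteq> {\<omega> \<in> space M.
              limsup (\<lambda>t. ci_width (CI t (obs X t \<omega>)) / ereal \<sigma>
                        * ereal (sqrt (real t / (2 * ln (ln (real t)))))) \<ge> 1}"
proof -
  interpret prob_space M by (rule assms(1))
  interpret P: prob_space P by (rule assms(2))
  have Xm[measurable]: "X (Suc i) \<in> borel_measurable M" for i using assms(3) by simp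
  have Xd: "distr M borel (X (Suc i)) = P" for i using assms(5) by simp
  have intx: "integrable P (\<lambda>x. x)" and intx2: "integrable P (\<lambda>x. x ^ 2)" using assms(6,7) .
  have sig: "0 < \<sigma>" by (rule assms(9))
  define g where "g x = (x - \<mu>) / \<sigma>" for x
  have gm[measurable]: "g \<in> borel_measurable borel" unfolding g_def by measurable
  define Y where "Y i \<omega> = g (X (Suc i) \<omega>)" for i \<omega>
  define Q where "Q = distr P borel g"
  have Ym[measurable]: "Y i \<in> borel_measurable M" for i unfolding Y_def by measurable
  have indY: "indep_vars (\<lambda>_. borel) Y UNIV"
  proof -
    have "indep_vars (\<lambda>j. PiM {Suc j} (\<lambda>_. borel)) (\<lambda>j \<omega>. restrict (\<lambda>i. X i \<omega>) {Suc j}) UNIV"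
      by (rule indep_vars_restrict[OF assms(4)]) (auto simp: disjoint_family_on_def)
    then have "indep_vars (\<lambda>_. borel) (\<lambda>j \<omega>. (\<lambda>f. g (f (Suc j))) (restrict (\<lambda>i. X i \<omega>) {Suc j})) UNIV"
      by (rule indep_vars_compose2) measurable
    then show ?thesis
      by (rule indep_vars_cong[THEN iffD1, rotated -1]) (auto simp: Y_def)
  qed
  have distrY: "distr M borel (Y n) = Q" for n
  proof -
    have "Q = distr (distr M borel (X (Suc n))) borel g" by (simp add: Q_def Xd)
    also have "\<dots> = distr M borel (g \<circ> X (Suc n))" by (rule distr_distr) auto
    finally show ?thesis by (simp add: Y_def[abs_def] comp_def)
  qed
  have intg: "integrable P g" unfolding g_def using intx by auto
  have intg2: "integrable P (\<lambda>x. (g x)\<^sup>2)"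
  proof -
    have "integrable P (\<lambda>x. (x ^ 2 - 2 * \<mu> * x + \<mu>\<^sup>2) / \<sigma>\<^sup>2)"
    proof -
      have i1: "integrable P (\<lambda>x. 2 * \<mu> * x)" using intx by (rule integrable_mult_right)
      have i2: "integrable P (\<lambda>x. x ^ 2 - 2 * \<mu> * x)" using Bochner_Integration.integrable_diff[OF intx2 i1] by simp
      have i3: "integrable P (\<lambda>x. \<mu>\<^sup>2)" by simp
      have "integrable P (\<lambda>x. x ^ 2 - 2 * \<mu> * x + \<mu>\<^sup>2)" using Bochner_Integration.integrable_add[OF i2 i3] by simp
      then show ?thesis by (rule integrable_divide)
    qed
    moreover have "(\<lambda>x. (x ^ 2 - 2 * \<mu> * x + \<mu>\<^sup>2) / \<sigma>\<^sup>2) = (\<lambda>x. (g x)\<^sup>2)"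
      unfolding g_def by (rule ext) (simp add: power_divide power2_diff)
    ultimately show ?thesis by simp
  qed
  have EY: "expectation (Y n) = integral\<^sup>L P g" for n
    unfolding Y_def using integral_distr[of "X (Suc n)" M borel g] by (simp add: Xd)
  have EY2: "expectation (\<lambda>\<omega>. (Y n \<omega>)\<^sup>2) = integral\<^sup>L P (\<lambda>x. (g x)\<^sup>2)" for n
    unfolding Y_def using integral_distr[of "X (Suc n)" M borel "\<lambda>x. (g x)\<^sup>2"] by (simp add: Xd)
  have Pg: "integral\<^sup>L P g = 0"
    unfolding g_def using intx by (simp add: assms(8) P.prob_space)
  have Pg2: "integral\<^sup>L P (\<lambda>x. (g x)\<^sup>2) = 1"
  proof -
    have "integral\<^sup>L P (\<lambda>x. (g x)\<^sup>2) = integral\<^sup>L P (\<lambda>x. (x - \<mu>)\<^sup>2 / \<sigma>\<^sup>2)"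
      by (simp add: g_def power_divide)
    also have "\<dots> = \<sigma>\<^sup>2 / \<sigma>\<^sup>2" using assms(10) by simp
    finally show ?thesis using sig by simp
  qed
  have sqY: "integrable M (\<lambda>x. (Y n x)^2)" for n
    unfolding Y_def using integrable_distr_eq[of "X (Suc n)" M borel "\<lambda>x. (g x)\<^sup>2"] intg2 by (simp add: Xd)
  interpret L: iid_lil M Y Q
  proof
    show "indep_vars (\<lambda>_. borel) Y UNIV" by (rule indY)
    show "distr M borel (Y n) = Q" for n by (rule distrY)
    show "expectation (Y n) = 0" for n using EY Pg by simp
    show "integrable M (\<lambda>x. (Y n x)^2)" for n by (rule sqY)
    show "variance (Y n) = 1" for n using EY Pg EY2 Pg2 by simp
  qed
  define cc where "cc r = 1 - inverse (real (Suc (Suc r)))" for r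
  have cc: "0 < cc r" "cc r < 1" for r by (auto simp: cc_def field_simps)
  have "AE \<omega> in M. \<forall>r. \<forall>t0. \<exists>t\<ge>t0. cc r * sqrt (2 * real t * ln (ln (real t))) \<le> \<bar>L.T t \<omega>\<bar>"
    using L.lil_lower_c[OF cc] by (simp add: AE_all_countable)
  then obtain N where N: "{\<omega>\<in>space M. \<not> (\<forall>r. \<forall>t0. \<exists>t\<ge>t0. cc r * sqrt (2 * real t * ln (ln (real t))) \<le> \<bar>L.T t \<omega>\<bar>)} \<subseteq> N"
      "emeasure M N = 0" "N \<in> sets M"
    by (rule AE_E)
  have Nnull: "N \<in> null_sets M" using N by (simp add: null_sets_def)
  define E where "E = {\<omega> \<in> space M. \<forall>t\<ge>1. \<mu> \<in> CI t (obs X t \<omega>)}"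
  define A where "A = E - N"
  have Ameas: "A \<in> sets M" unfolding A_def using assms(13)[folded E_def] N(3) by (rule sets.Diff)
  have measA: "measure M A \<ge> 1 - \<alpha>"
    unfolding A_def using assms(14)[folded E_def] measure_Diff_null_set[OF assms(13)[folded E_def] Nnull] by simp
  have sub: "A \<subseteq> {\<omega> \<in> space M.
              limsup (\<lambda>t. ci_width (CI t (obs X t \<omega>)) / ereal \<sigma>
                        * ereal (sqrt (real t / (2 * ln (ln (real t)))))) \<ge> 1}"
  proof
    fix \<omega> assume wA: "\<omega> \<in> A"
    then have wE: "\<omega> \<in> E" and wN: "\<omega> \<notin> N" by (auto simp: A_def)
    from wE have \<omega>: "\<omega> \<in> space M" and inE: "\<And>t. 1 \<le> t \<Longrightarrow> \<mu> \<in> CI t (obs X t \<omega>)"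
      unfolding E_def by auto
    have good: "\<forall>r. \<forall>t0. \<exists>t\<ge>t0. cc r * sqrt (2 * real t * ln (ln (real t))) \<le> \<bar>L.T t \<omega>\<bar>"
    proof (rule ccontr)
      assume "\<not> (\<forall>r. \<forall>t0. \<exists>t\<ge>t0. cc r * sqrt (2 * real t * ln (ln (real t))) \<le> \<bar>L.T t \<omega>\<bar>)"
      then have "\<omega> \<in> {\<omega>\<in>space M. \<not> (\<forall>r. \<forall>t0. \<exists>t\<ge>t0. cc r * sqrt (2 * real t * ln (ln (real t))) \<le> \<bar>L.T t \<omega>\<bar>)}"
        using \<omega> by (simp only: mem_Collect_eq simp_thms)
      then show False using N(1) wN by blast
    qed
    define e where "e t = ci_width (CI t (obs X t \<omega>)) / ereal \<sigma> * ereal (sqrt (real t / (2 * ln (ln (real t)))))" for t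
    have key: "ereal (cc r) \<le> e t" if "4 \<le> t" "cc r * sqrt (2 * real t * ln (ln (real t))) \<le> \<bar>L.T t \<omega>\<bar>" for r t
    proof -
      have t1: "1 \<le> t" using that by simp
      define mh where "mh = (\<Sum>i=1..t. X i \<omega>) / real t"
      have mhin: "mh \<in> CI t (obs X t \<omega>)" unfolding mh_def by (rule assms(15)[OF t1 \<omega>])
      have W: "ereal \<bar>mh - \<mu>\<bar> \<le> ci_width (CI t (obs X t \<omega>))"
        by (rule width_ge[OF mhin inE[OF t1]])
      have Tt: "L.T t \<omega> = ((\<Sum>i=1..t. X i \<omega>) - real t * \<mu>) / \<sigma>"
      proof -
        have s1: "(\<Sum>i=1..t. X i \<omega>) = (\<Sum>i<t. X (Suc i) \<omega>)"
          using sum.atLeast1_atMost_eq[of "\<lambda>i. X i \<omega>" t] by simp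
        show ?thesis
          unfolding L.T_def Y_def g_def s1 by (simp add: sum_divide_distrib[symmetric] sum_subtractf)
      qed
      have "\<bar>mh - \<mu>\<bar> / \<sigma> = \<bar>L.T t \<omega>\<bar> / real t"
        unfolding Tt mh_def using sig t1 by (simp add: abs_divide field_simps)
      moreover have "cc r \<le> \<bar>L.T t \<omega>\<bar> / real t * sqrt (real t / (2 * ln (ln (real t))))"
        by (rule arith_final) (use that in auto)
      ultimately have "cc r \<le> \<bar>mh - \<mu>\<bar> / \<sigma> * sqrt (real t / (2 * ln (ln (real t))))" by simp
      also have "ereal (\<bar>mh - \<mu>\<bar> / \<sigma> * sqrt (real t / (2 * ln (ln (real t))))) \<le> e t"
      proof -
        have t4: "(4::real) \<le> real t" using that(1) by simp
        then have "exp 1 \<le> real t" using exp_le by linarith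
        then have "ln (exp 1) \<le> ln (real t)" using t4 by (subst ln_le_cancel_iff) auto
        then have "0 \<le> ln (ln (real t))" by simp
        then show ?thesis
          unfolding e_def by (intro expr_ge[OF W sig]) auto
      qed
      finally show ?thesis by simp
    qed
    have "1 \<le> limsup e"
    proof (rule ccontr)
      assume "\<not> 1 \<le> limsup e"
      then have lt: "limsup e < 1" by simp
      then obtain y where y: "limsup e < y" "y < 1" using dense by blast
      have "eventually (\<lambda>t. y > e t) sequentially"
        using Limsup_le_iff[of sequentially e "limsup e"] y(1) by auto
      then obtain Nt where Nt: "\<And>t. Nt \<le> t \<Longrightarrow> e t < y" unfolding eventually_sequentially by blast
      obtain r where r: "y < ereal (cc r)"
      proof (cases y)
        case (real y')
        then have "0 < 1 - y'" using y(2) by simp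
        then obtain n where n: "inverse (real (Suc n)) < 1 - y'" using reals_Archimedean by blast
        have iv: "inverse (real (Suc (Suc n))) \<le> inverse (real (Suc n))" by (simp add: field_simps)
        have "y' < cc n" using n iv unfolding cc_def by linarith
        then show ?thesis using real by (intro that[of n]) simp
      next
        case PInf then show ?thesis using y(2) by simp
      next
        case MInf then show ?thesis by (intro that[of 0]) simp
      qed
      obtain t where t: "max Nt 4 \<le> t" "cc r * sqrt (2 * real t * ln (ln (real t))) \<le> \<bar>L.T t \<omega>\<bar>"
        using good by blast
      have "ereal (cc r) \<le> e t" by (rule key) (use t in auto)
      moreover have "e t < y" using Nt t(1) by simp
      ultimately show False using r by simp
    qed
    then show "\<omega> \<in> {\<omega> \<in> space M. limsup (\<lambda>t. ci_width (CI t (obs X t \<omega>)) / ereal \<sigma>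
                        * ereal (sqrt (real t / (2 * ln (ln (real t)))))) \<ge> 1}"
      using \<omega> by (simp add: e_def[abs_def])
  qed
  show ?thesis using Ameas measA sub by blast
qed

end
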